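(* Let $Z$ be a separable scattered Tychonoff space whose scattered height $ht(Z)$ equals $2$. Then $Z$ is a $\Delta$-space.
   Context: A space is scattered if every nonempty subset $A$ has a point isolated in $A$. For $A\subseteq X$, $A^{(1)}$ is the set of non-isolated points of $A$ (in the subspace $A$). Derivatives: $X^{(0)}=X$, $X^{(\alpha+1)}=(X^{(\alpha)})^{(1)}$, $X^{(\gamma)}=\bigcap_{\alpha<\gamma}X^{(\alpha)}$ for limit $\gamma$. The scattered height $ht(X)$ of a scattered space is the least ordinal $\alpha$ with $X^{(\alpha)}=\emptyset$. A topological space $X$ is a $\Delta$-space if for every decreasing sequence $\{D_n:n\in\omega\}$ of subsets of $X$ with $\bigcap_n D_n=\emptyset$ there is a decreasing sequence $\{V_n:n\in\omega\}$ of open subsets of $X$ with $D_n\subseteq V_n$ for all $n$ and $\bigcap_n V_n=\emptyset$. *)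

theory Defs
  imports "HOL-Analysis.Analysis"
begin

definition isolated_pt_in :: "'a topology \<Rightarrow> 'a set \<Rightarrow> 'a \<Rightarrow> bool" where
  "isolated_pt_in X A x \<longleftrightarrow> x \<in> A \<and> (\<exists>U. openin X U \<and> U \<inter> A = {x})"

definition scattered_space :: "'a topology \<Rightarrow> bool" where
  "scattered_space X \<longleftrightarrow>
     (\<forall>A. A \<subseteq> topspace X \<and> A \<noteq> {} \<longrightarrow> (\<exists>x. isolated_pt_in X A x))"

definition cb_derivative :: "'a topology \<Rightarrow> 'a set \<Rightarrow> 'a set" where
  "cb_derivative X A = {x \<in> A. \<not> isolated_pt_in X A x}"

definition cb_iter :: "'a topology \<Rightarrow> nat \<Rightarrow> 'a set" where
  "cb_iter X n = (cb_derivative X ^^ n) (topspace X)"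

definition scattered_height_eq :: "'a topology \<Rightarrow> nat \<Rightarrow> bool" where
  "scattered_height_eq X n \<longleftrightarrow> cb_iter X n = {} \<and> (\<forall>m<n. cb_iter X m \<noteq> {})"

definition Tychonoff_space :: "'a topology \<Rightarrow> bool" where
  "Tychonoff_space X \<longleftrightarrow> t1_space X \<and> completely_regular_space X"

definition Delta_space :: "'a topology \<Rightarrow> bool" where
  "Delta_space X \<longleftrightarrow>
     (\<forall>D :: nat \<Rightarrow> 'a set.
        (\<forall>n. D n \<subseteq> topspace X) \<and> decseq D \<and> (\<Inter>n. D n) = {} \<longrightarrow>
        (\<exists>V :: nat \<Rightarrow> 'a set. (\<forall>n. openin X (V n)) \<and> decseq V \<and>
              (\<forall>n. D n \<subseteq> V n) \<and> (\<Inter>n. V n) = {}))"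

end

theory Submission
  imports Defs
begin

theorem corollary3p9:
  fixes Z :: "'a topology"
  assumes "separable_space Z"
    and "scattered_space Z"
    and "Tychonoff_space Z"
    and "scattered_height_eq Z 2"
  shows "Delta_space Z"
proof -
  define T where "T = topspace Z"
  define L where "L = cb_derivative Z T"
  define I where "I = T - L"
  have t1: "t1_space Z" using assms(3) by (simp add: Tychonoff_space_def)
  have c2: "cb_iter Z 2 = {}" using assms(4) by (simp add: scattered_height_eq_def)
  have LT: "L \<subseteq> T" by (auto simp: L_def cb_derivative_def)
  have "\<forall>x\<in>L. isolated_pt_in Z L x"
  proof
    fix x assume "x \<in> L"
    have "cb_iter Z 2 = cb_derivative Z L"
      by (simp add: cb_iter_def L_def T_def numeral_2_eq_2)
    with c2 \<open>x \<in> L\<close> show "isolated_pt_in Z L x" by (auto simp: cb_derivative_def)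
  qed
  then obtain U where U: "\<And>x. x \<in> L \<Longrightarrow> openin Z (U x) \<and> U x \<inter> L = {x}"
    unfolding isolated_pt_in_def by metis
  have Iopen: "openin Z {y}" if "y \<in> I" for y
  proof -
    from that have "isolated_pt_in Z T y" by (auto simp: I_def L_def cb_derivative_def)
    then obtain W where W: "openin Z W" "W \<inter> T = {y}" by (auto simp: isolated_pt_in_def)
    have "W \<subseteq> T" using W(1) by (simp add: T_def openin_subset)
    then have "W = {y}" using W(2) by blast
    with W(1) show ?thesis by simp
  qed
  obtain C where C: "countable C" "C \<subseteq> T" "Z closure_of C = T"
    using assms(1) by (auto simp: separable_space_def T_def)
  have IC: "I \<subseteq> C"
  proof
    fix y assume y: "y \<in> I"
    then have "y \<in> Z closure_of C" using C(3) by (auto simp: I_def)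
    then show "y \<in> C" using Iopen[OF y] unfolding in_closure_of by blast
  qed
  have "countable I" using IC C(1) countable_subset by blast
  obtain g :: "nat \<Rightarrow> 'a" where g: "I \<subseteq> range g"
  proof (cases "I = {}")
    case True then show ?thesis using that by blast
  next
    case False then show ?thesis using that range_from_nat_into[OF False \<open>countable I\<close>] by blast
  qed
  define F where "F n = I \<inter> g ` {..<n}" for n
  have Fclosed: "closedin Z (F n)" for n
  proof -
    have "finite (F n)" by (simp add: F_def)
    moreover have "F n \<subseteq> topspace Z" by (auto simp: F_def I_def T_def)
    ultimately show ?thesis using t1 unfolding t1_space_closedin_finite by blast
  qed
  show ?thesis
    unfolding Delta_space_def
  proof (intro allI impI)
    fix D :: "nat \<Rightarrow> 'a set"
    assume D: "(\<forall>n. D n \<subseteq> topspace Z) \<and> decseq D \<and> (\<Inter>n. D n) = {}"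
    define V where "V n = (\<Union>y\<in>D n \<inter> I. {y}) \<union> (\<Union>x\<in>L \<inter> D n. U x - F n)" for n
    have Vopen: "openin Z (V n)" for n
      unfolding V_def
      by (intro openin_Un openin_Union) (auto intro: Iopen openin_diff Fclosed simp: U)
    have Vdec: "decseq V"
    proof (rule decseq_SucI)
      fix n
      have "D (Suc n) \<subseteq> D n" using D by (simp add: decseq_Suc_iff)
      moreover have "F n \<subseteq> F (Suc n)" by (auto simp: F_def)
      ultimately show "V (Suc n) \<subseteq> V n" unfolding V_def by blast
    qed
    have DV: "D n \<subseteq> V n" for n
    proof
      fix x assume x: "x \<in> D n"
      then have "x \<in> T" using D by (auto simp: T_def)
      show "x \<in> V n"
      proof (cases "x \<in> I")
        case True then show ?thesis using x by (auto simp: V_def)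
      next
        case False
        then have "x \<in> L" using \<open>x \<in> T\<close> by (auto simp: I_def)
        then have "x \<in> U x" using U by blast
        moreover have "x \<notin> F n" using False by (auto simp: F_def)
        ultimately show ?thesis using x \<open>x \<in> L\<close> unfolding V_def by blast
      qed
    qed
    have "(\<Inter>n. V n) = {}"
    proof (rule ccontr)
      assume "(\<Inter>n. V n) \<noteq> {}"
      then obtain y where y: "\<And>n. y \<in> V n" by blast
      have yT: "y \<in> T" using Vopen[of 0] y[of 0] openin_subset unfolding T_def by blast
      have "y \<in> D n" for n
      proof (cases "y \<in> I")
        case False
        then have "y \<in> L" using yT by (auto simp: I_def)
        from y[of n] False obtain x where "x \<in> L \<inter> D n" "y \<in> U x" by (auto simp: V_def)
        with U[of x] \<open>y \<in> L\<close> have "y = x" by blast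
        with \<open>x \<in> L \<inter> D n\<close> show ?thesis by blast
      next
        case True
        then obtain k where k: "y = g k" using g by blast
        define N where "N = max n (Suc k)"
        have "y \<in> F N" using True k by (auto simp: F_def N_def)
        then have "y \<in> D N" using y[of N] by (auto simp: V_def)
        moreover have "D N \<subseteq> D n" using D by (simp add: decseq_def N_def)
        ultimately show ?thesis by blast
      qed
      then show False using D by blast
    qed
    then show "\<exists>V. (\<forall>n. openin Z (V n)) \<and> decseq V \<and> (\<forall>n. D n \<subseteq> V n) \<and> (\<Inter>n. V n) = {}"
      using Vopen Vdec DV by blast
  qed
qed

end
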